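(* Fix a sequence $q_1,q_2,\dots$ of probability measures on $\mathbb{N}_0$ (a varying environment), $n\ge1$ and $z\ge1$, with notation as in the context. Then $$\mathbb{P}\big(\hat Z^{(0)}_n+\dots+\hat Z^{(n-1)}_n=0\big)=\prod_{k=0}^{n-1}\mathbb{P}\big(\hat Z^{(k)}_n=0\big)=\frac{\mathsf p_{n-1,n}}{\mathsf p_{-1,n}}\prod_{k=0}^{n-1}f_k'\big(f_{k,n}(0)\big),$$ with the convention $f_0(s):=s^z$.
   Context: Let $f_k$ be the p.g.f. of $q_k$, $f_{k,n}=f_{k+1}\circ\dots\circ f_n$, $f_{n,n}$ the identity. $(Z_j)$ is the branching process in varying environment: given $Z_{j-1}$, $Z_j$ is a sum of $Z_{j-1}$ i.i.d. variables of law $q_j$. Put $\mathsf p_{k,n}=1-f_{k,n}(0)$ for $0\le k<n$, $\mathsf p_{n,n}=1$, and $\mathsf p_{-1,n}=1-f_{0,n}(0)^z$ (the probability that $Z_n>0$ when $Z_0=z$); assume $\mathsf p_{k,n}>0$ for $-1\le k\le n$. Let $\hat Y_0,\dots,\hat Y_n$ be independent with $\mathbb{P}(\hat Y_0=i)=\frac{1-f_{0,n}(0)}{\mathsf p_{-1,n}}f_{0,n}(0)^{z-i-1}$ for $0\le i\le z-1$, and for $1\le k\le n$, $i\ge0$, $\mathbb{P}(\hat Y_k=i)=\frac{\mathsf p_{k,n}}{\mathsf p_{k-1,n}}\sum_{j\ge i+1}q_k(j)f_{k,n}(0)^{j-i-1}$. For $0\le k\le n$, let $(\hat Z^{(k)}_j)_{j\ge0}$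 be independent processes with $\hat Z^{(k)}_j=0$ for $j<k$, $\hat Z^{(k)}_k=\hat Y_k$, and for $j>k$, given $\hat Z^{(k)}_{j-1}$, $\hat Z^{(k)}_j$ is a sum of $\hat Z^{(k)}_{j-1}$ i.i.d. variables of law $q_j$. *)

theory Defs
  imports "HOL-Analysis.Analysis" "HOL-Probability.Probability"
begin

text \<open>Environment: q k is the offspring law of generation k (k \<ge> 1); q 0 is unused.\<close>

definition pgf :: "nat pmf \<Rightarrow> real \<Rightarrow> real" where
  "pgf p s = (\<Sum>j. pmf p j * s ^ j)"

text \<open>f_{k,n} = f_{k+1} o ... o f_n, identity if n \<le> k.\<close>
fun fcomp :: "(nat \<Rightarrow> nat pmf) \<Rightarrow> nat \<Rightarrow> nat \<Rightarrow> real \<Rightarrow> real" where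
  "fcomp q k 0 s = s"
| "fcomp q k (Suc n) s = (if k \<le> n then fcomp q k n (pgf (q (Suc n)) s) else s)"

definition fgen :: "(nat \<Rightarrow> nat pmf) \<Rightarrow> nat \<Rightarrow> nat \<Rightarrow> real \<Rightarrow> real" where
  "fgen q z k = (if k = 0 then (\<lambda>s. s ^ z) else pgf (q k))"

text \<open>p_{k,n} for 0 \<le> k \<le> n (note p_{n,n} = 1 - 0 = 1), and p_{-1,n}.\<close>
definition pp :: "(nat \<Rightarrow> nat pmf) \<Rightarrow> nat \<Rightarrow> nat \<Rightarrow> real" where
  "pp q k n = 1 - fcomp q k n 0"

definition pm1 :: "(nat \<Rightarrow> nat pmf) \<Rightarrow> nat \<Rightarrow> nat \<Rightarrow> real" where
  "pm1 q z n = 1 - fcomp q 0 n 0 ^ z"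

fun sum_iid :: "nat pmf \<Rightarrow> nat \<Rightarrow> nat pmf" where
  "sum_iid p 0 = return_pmf 0"
| "sum_iid p (Suc m) = bind_pmf p (\<lambda>a. map_pmf (\<lambda>b. a + b) (sum_iid p m))"

text \<open>Law at time n of the branching process in environment q started at time k with law \<mu>.\<close>
fun evolve :: "(nat \<Rightarrow> nat pmf) \<Rightarrow> nat \<Rightarrow> nat pmf \<Rightarrow> nat \<Rightarrow> nat pmf" where
  "evolve q k \<mu> 0 = \<mu>"
| "evolve q k \<mu> (Suc n) = (if k \<le> n then bind_pmf (evolve q k \<mu> n) (\<lambda>x. sum_iid (q (Suc n)) x) else \<mu>)"

definition Yhat :: "(nat \<Rightarrow> nat pmf) \<Rightarrow> nat \<Rightarrow> nat \<Rightarrow> nat \<Rightarrow> nat pmf" where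
  "Yhat q z n k = (if k = 0 then
      embed_pmf (\<lambda>i. if i \<le> z - 1 then
         (1 - fcomp q 0 n 0) / pm1 q z n * fcomp q 0 n 0 ^ (z - i - 1) else 0)
    else
      embed_pmf (\<lambda>i. pp q k n / pp q (k - 1) n *
         (\<Sum>j. pmf (q k) (j + i + 1) * fcomp q k n 0 ^ j)))"

definition Zhat_law :: "(nat \<Rightarrow> nat pmf) \<Rightarrow> nat \<Rightarrow> nat \<Rightarrow> nat \<Rightarrow> nat pmf" where
  "Zhat_law q z n k = evolve q k (Yhat q z n k) n"

end

theory Submission
  imports Defs
begin

lemma pmf_ennsum: "(\<Sum>j. ennreal (pmf p (j::nat))) = 1"
proof -
  have "(\<integral>\<^sup>+x. ennreal (pmf p x) \<partial>count_space UNIV) = emeasure (measure_pmf p) UNIV"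
    by (rule nn_integral_pmf)
  also have "\<dots> = 1" using measure_pmf.emeasure_space_1 by simp
  finally show ?thesis by (simp add: nn_integral_count_space_nat)
qed

lemma summable_pmf_nat: "summable (pmf (p :: nat pmf))"
  by (rule summable_suminf_not_top) (auto simp: pmf_ennsum)

lemma sums_pmf_nat: "pmf (p :: nat pmf) sums 1"
proof -
  have "ennreal (\<Sum>j. pmf p j) = 1"
    using suminf_ennreal2[of "pmf p"] summable_pmf_nat pmf_ennsum by simp
  then have "(\<Sum>j. pmf p j) = 1" by simp
  then show ?thesis using summable_pmf_nat summable_sums by metis
qed

lemma pgf_summable:
  assumes "0 \<le> s" "s \<le> 1"
  shows "summable (\<lambda>j. pmf p j * s ^ j)"
proof (rule summable_comparison_test'[OF summable_pmf_nat[of p]])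
  fix j :: nat show "norm (pmf p j * s ^ j) \<le> pmf p j"
    using assms by (simp add: abs_mult mult_left_le power_le_one)
qed

lemma pgf_sums: "0 \<le> s \<Longrightarrow> s \<le> 1 \<Longrightarrow> (\<lambda>j. pmf p j * s ^ j) sums pgf p s"
  unfolding pgf_def using pgf_summable summable_sums by blast

lemma pgf_range:
  assumes "0 \<le> s" "s \<le> 1"
  shows "0 \<le> pgf p s" "pgf p s \<le> 1"
proof -
  show "0 \<le> pgf p s" unfolding pgf_def
    using assms by (intro suminf_nonneg pgf_summable) auto
  have "pgf p s \<le> (\<Sum>j. pmf p j)" unfolding pgf_def
    using assms by (intro suminf_le pgf_summable summable_pmf_nat) (auto simp: mult_left_le power_le_one)
  then show "pgf p s \<le> 1" using sums_pmf_nat sums_unique by metis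
qed

definition G :: "nat pmf \<Rightarrow> real \<Rightarrow> ennreal" where
  "G p t = (\<integral>\<^sup>+x. ennreal (t ^ x) \<partial>measure_pmf p)"

lemma G_sum: "0 \<le> t \<Longrightarrow> G p t = (\<Sum>x. ennreal (pmf p x * t ^ x))"
  unfolding G_def by (simp add: nn_integral_measure_pmf nn_integral_count_space_nat ennreal_mult)

lemma G_pgf: assumes "0 \<le> t" "t \<le> 1" shows "G p t = ennreal (pgf p t)"
  using assms by (simp add: G_sum pgf_def suminf_ennreal2 pgf_summable)

lemma G_zero: "G p 0 = ennreal (pmf p 0)"
proof -
  have "G p 0 = (\<integral>\<^sup>+x. indicator {0} x \<partial>measure_pmf p)"
    unfolding G_def by (intro nn_integral_cong) (auto simp: indicator_def)
  then show ?thesis by (simp add: emeasure_pmf_single)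
qed

lemma G_sum_iid: assumes "0 \<le> t" "t \<le> 1" shows "G (sum_iid p m) t = ennreal (pgf p t ^ m)"
proof (induction m)
  case 0 then show ?case by (simp add: G_def)
next
  case (Suc m)
  have "G (sum_iid p (Suc m)) t = (\<integral>\<^sup>+a. \<integral>\<^sup>+b. ennreal (t ^ a) * ennreal (t ^ b) \<partial>sum_iid p m \<partial>p)"
    unfolding G_def using assms by (simp add: power_add ennreal_mult)
  also have "\<dots> = (\<integral>\<^sup>+a. ennreal (t ^ a) * G (sum_iid p m) t \<partial>p)"
    unfolding G_def by (simp add: nn_integral_cmult)
  also have "\<dots> = G p t * G (sum_iid p m) t"
    unfolding G_def by (simp add: nn_integral_multc)
  finally show ?case using Suc assms
    by (simp add: G_pgf ennreal_mult pgf_range)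
qed

lemma fcomp_triv: "n \<le> k \<Longrightarrow> fcomp q k n t = t"
  by (induction n arbitrary: t) auto

lemma fcomp_range: "0 \<le> t \<Longrightarrow> t \<le> 1 \<Longrightarrow> 0 \<le> fcomp q k n t \<and> fcomp q k n t \<le> 1"
  by (induction n arbitrary: t) (auto simp: pgf_range)

lemma fcomp_step: "1 \<le> k \<Longrightarrow> k \<le> n \<Longrightarrow> fcomp q (k - 1) n t = pgf (q k) (fcomp q k n t)"
proof (induction n arbitrary: t)
  case 0 then show ?case by simp
next
  case (Suc n)
  show ?case
  proof (cases "k = Suc n")
    case True
    then show ?thesis by (simp add: fcomp_triv)
  next
    case False
    then have "k \<le> n" using Suc by simp
    moreover have "k - 1 \<le> n" using \<open>k \<le> n\<close> by simp
    ultimately show ?thesis using Suc by simp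
  qed
qed

lemma G_evolve:
  assumes "0 \<le> t" "t \<le> 1"
  shows "G (evolve q k \<mu> n) t = (\<integral>\<^sup>+y. ennreal (fcomp q k n t ^ y) \<partial>measure_pmf \<mu>)"
  using assms
proof (induction n arbitrary: t)
  case 0 then show ?case by (simp add: G_def)
next
  case (Suc n)
  show ?case
  proof (cases "k \<le> n")
    case True
    have r: "0 \<le> pgf (q (Suc n)) t" "pgf (q (Suc n)) t \<le> 1" using Suc.prems pgf_range by auto
    have "G (evolve q k \<mu> (Suc n)) t = (\<integral>\<^sup>+x. G (sum_iid (q (Suc n)) x) t \<partial>evolve q k \<mu> n)"
      using True by (simp add: G_def)
    also have "\<dots> = (\<integral>\<^sup>+x. ennreal (pgf (q (Suc n)) t ^ x) \<partial>evolve q k \<mu> n)"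
      using Suc.prems by (simp add: G_sum_iid)
    also have "\<dots> = G (evolve q k \<mu> n) (pgf (q (Suc n)) t)" by (simp add: G_def)
    also have "\<dots> = (\<integral>\<^sup>+y. ennreal (fcomp q k n (pgf (q (Suc n)) t) ^ y) \<partial>measure_pmf \<mu>)"
      using Suc.IH r by blast
    finally show ?thesis using True by simp
  next
    case False
    then show ?thesis by (simp add: G_def)
  qed
qed

lemma diag_ennreal:
  fixes H :: "nat \<Rightarrow> nat \<Rightarrow> ennreal"
  shows "(\<Sum>i. \<Sum>j. H i j) = (\<Sum>m. \<Sum>j\<le>m. H (m - j) j)"
proof -
  have "(\<Sum>i. \<Sum>j. H i j) = (\<integral>\<^sup>+i. \<integral>\<^sup>+j. (\<lambda>(a,b). H a b) (i, j) \<partial>count_space UNIV \<partial>count_space UNIV)"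
    by (simp add: nn_integral_count_space_nat)
  also have "\<dots> = (\<integral>\<^sup>+p. (\<lambda>(a,b). H a b) p \<partial>count_space UNIV)"
    by (rule nn_integral_fst_count_space)
  also have "\<dots> = (\<integral>\<^sup>+p. (\<lambda>(a,b). H a b) ((\<lambda>(m,j). (m - j, j)) p) \<partial>count_space {(m,j). j \<le> m})"
  proof (rule nn_integral_bij_count_space[symmetric])
    show "bij_betw (\<lambda>(m,j). (m - j, j)) {(m,j). j \<le> m} (UNIV :: (nat \<times> nat) set)"
      by (rule bij_betwI[where g="\<lambda>(a,b). (a + b, b)"]) auto
  qed
  also have "\<dots> = (\<integral>\<^sup>+p. (\<lambda>(m,j). H (m - j) j * indicator {..m} j) p \<partial>count_space UNIV)"
    by (subst nn_integral_count_space_indicator) (auto intro!: nn_integral_cong simp: indicator_def)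
  also have "\<dots> = (\<integral>\<^sup>+m. \<integral>\<^sup>+j. (\<lambda>(m,j). H (m - j) j * indicator {..m} j) (m, j) \<partial>count_space UNIV \<partial>count_space UNIV)"
    by (rule nn_integral_fst_count_space[symmetric])
  also have "\<dots> = (\<Sum>m. \<Sum>j. H (m - j) j * indicator {..m} j)"
    by (simp add: nn_integral_count_space_nat)
  also have "\<dots> = (\<Sum>m. \<Sum>j\<le>m. H (m - j) j)"
  proof (rule suminf_cong)
    fix m
    have "(\<Sum>j. H (m - j) j * indicator {..m} j) = (\<Sum>j\<le>m. H (m - j) j * indicator {..m} j)"
      by (rule suminf_finite) auto
    then show "(\<Sum>j. H (m - j) j * indicator {..m} j) = (\<Sum>j\<le>m. H (m - j) j)" by simp
  qed
  finally show ?thesis .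
qed

lemma Zhat_zero_sum:
  "ennreal (pmf (Zhat_law q z n k) 0) = (\<Sum>y. ennreal (pmf (Yhat q z n k) y * fcomp q k n 0 ^ y))"
proof -
  have r: "0 \<le> fcomp q k n 0" using fcomp_range[of 0 q k n] by simp
  have "ennreal (pmf (Zhat_law q z n k) 0) = G (Zhat_law q z n k) 0" by (simp add: G_zero)
  also have "\<dots> = G (Yhat q z n k) (fcomp q k n 0)"
    unfolding Zhat_law_def using G_evolve[of 0 q k "Yhat q z n k" n] by (simp add: G_def)
  also have "\<dots> = (\<Sum>y. ennreal (pmf (Yhat q z n k) y * fcomp q k n 0 ^ y))"
    using r by (rule G_sum)
  finally show ?thesis .
qed

lemma inner_summable:
  assumes "0 \<le> s" "s < 1"
  shows "summable (\<lambda>j. pmf p (j + i + 1) * (s::real) ^ j)"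
proof (rule summable_comparison_test'[OF summable_geometric[of s]])
  show "norm s < 1" using assms by simp
  fix j :: nat show "norm (pmf p (j + i + 1) * s ^ j) \<le> s ^ j"
    using assms by (simp add: abs_mult mult_left_le_one_le pmf_le_1)
qed

lemma gp_sums:
  assumes "0 \<le> s" "s < 1"
  shows "(\<lambda>m. pmf p (Suc m) * (\<Sum>j\<le>m. s ^ j)) sums ((1 - pgf p s) / (1 - s))"
proof -
  have a: "(\<lambda>m. pmf p (Suc m)) sums (1 - pmf p 0)"
    using sums_Suc_iff[of "pmf p" "1 - pmf p 0"] sums_pmf_nat by simp
  have b: "(\<lambda>m. pmf p (Suc m) * s ^ Suc m) sums (pgf p s - pmf p 0)"
    using sums_Suc_iff[of "\<lambda>j. pmf p j * s ^ j" "pgf p s - pmf p 0"] pgf_sums[of s p] assms by simp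
  have "(\<lambda>m. (pmf p (Suc m) - pmf p (Suc m) * s ^ Suc m) / (1 - s)) sums (((1 - pmf p 0) - (pgf p s - pmf p 0)) / (1 - s))"
    by (intro sums_divide sums_diff a b)
  moreover have "\<And>m. (pmf p (Suc m) - pmf p (Suc m) * s ^ Suc m) / (1 - s) = pmf p (Suc m) * (\<Sum>j\<le>m. s ^ j)"
  proof -
    fix m
    have "(1 - s) * (\<Sum>j\<le>m. s ^ j) = 1 - s ^ Suc m" by (rule sum_gp_basic)
    then show "(pmf p (Suc m) - pmf p (Suc m) * s ^ Suc m) / (1 - s) = pmf p (Suc m) * (\<Sum>j\<le>m. s ^ j)"
    proof -
      have "pmf p (Suc m) - pmf p (Suc m) * s ^ Suc m = pmf p (Suc m) * ((1 - s) * (\<Sum>j\<le>m. s ^ j))"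
        by (subst \<open>(1 - s) * _ = _\<close>) (simp add: right_diff_distrib)
      then show ?thesis using assms by simp
    qed
  qed
  ultimately show ?thesis by simp
qed

lemma pgf_deriv:
  assumes "0 \<le> s" "s < 1"
  shows "deriv (pgf p) s = (\<Sum>m. diffs (pmf p) m * s ^ m)"
    and "summable (\<lambda>m. diffs (pmf p) m * s ^ m)"
proof -
  have e: "pgf p = (\<lambda>x. \<Sum>m. pmf p m * x ^ m)" by (simp add: fun_eq_iff pgf_def)
  have "DERIV (\<lambda>x. \<Sum>m. pmf p m * x ^ m) s :> (\<Sum>m. diffs (pmf p) m * s ^ m)"
    by (rule termdiffs_strong[where K=1]) (use assms summable_pmf_nat in auto)
  then show "deriv (pgf p) s = (\<Sum>m. diffs (pmf p) m * s ^ m)"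
    unfolding e by (rule DERIV_imp_deriv)
  show "summable (\<lambda>m. diffs (pmf p) m * s ^ m)"
  proof (rule termdiff_converges[where K=1])
    show "norm s < 1" using assms by simp
    fix x :: real assume x: "norm x < 1"
    show "summable (\<lambda>m. pmf p m * x ^ m)"
    proof (rule summable_comparison_test'[OF summable_geometric[of "\<bar>x\<bar>"]])
      show "norm \<bar>x\<bar> < 1" using x by simp
      fix j :: nat show "norm (pmf p j * x ^ j) \<le> \<bar>x\<bar> ^ j"
        by (simp add: abs_mult power_abs mult_left_le_one_le pmf_le_1)
    qed
  qed
qed

lemma Y_pos:
  fixes p :: "nat pmf" and s c :: real
  assumes s0: "0 \<le> s" and s1: "s < 1" and c0: "0 < c" and cc: "c * ((1 - pgf p s) / (1 - s)) = 1"
  defines "f \<equiv> \<lambda>i. c * (\<Sum>j. pmf p (j + i + 1) * s ^ j)"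
  shows "\<And>i. 0 \<le> f i" and "(\<integral>\<^sup>+i. ennreal (f i) \<partial>count_space UNIV) = 1"
    and "(\<Sum>i. ennreal (f i * s ^ i)) = ennreal (c * deriv (pgf p) s)"
proof -
  have inn: "0 \<le> (\<Sum>j. pmf p (j + i + 1) * s ^ j)" for i
    using s0 s1 by (intro suminf_nonneg inner_summable) auto
  show fnn: "0 \<le> f i" for i unfolding f_def using c0 inn by simp
  have fi: "ennreal (f i) = ennreal c * (\<Sum>j. ennreal (pmf p (j + i + 1) * s ^ j))" for i
  proof -
    have "ennreal (\<Sum>j. pmf p (j + i + 1) * s ^ j) = (\<Sum>j. ennreal (pmf p (j + i + 1) * s ^ j))"
      using s0 s1 by (intro suminf_ennreal2[symmetric] inner_summable) auto
    moreover have "ennreal (f i) = ennreal c * ennreal (\<Sum>j. pmf p (j + i + 1) * s ^ j)"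
      unfolding f_def using c0 inn by (intro ennreal_mult) auto
    ultimately show ?thesis by simp
  qed
  have "(\<integral>\<^sup>+i. ennreal (f i) \<partial>count_space UNIV) = (\<Sum>i. ennreal (f i))"
    by (simp add: nn_integral_count_space_nat)
  also have "\<dots> = ennreal c * (\<Sum>i. \<Sum>j. ennreal (pmf p (j + i + 1) * s ^ j))"
    by (simp add: fi)
  also have "(\<Sum>i. \<Sum>j. ennreal (pmf p (j + i + 1) * s ^ j)) = (\<Sum>m. \<Sum>j\<le>m. ennreal (pmf p (j + (m - j) + 1) * s ^ j))"
    by (rule diag_ennreal)
  also have "\<dots> = (\<Sum>m. ennreal (pmf p (Suc m) * (\<Sum>j\<le>m. s ^ j)))"
  proof (rule suminf_cong)
    fix m
    have "(\<Sum>j\<le>m. ennreal (pmf p (j + (m - j) + 1) * s ^ j)) = (\<Sum>j\<le>m. ennreal (pmf p (Suc m) * s ^ j))"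
      by (rule sum.cong) auto
    also have "\<dots> = ennreal (\<Sum>j\<le>m. pmf p (Suc m) * s ^ j)"
      using s0 by (simp add: sum_ennreal)
    finally show "(\<Sum>j\<le>m. ennreal (pmf p (j + (m - j) + 1) * s ^ j)) = ennreal (pmf p (Suc m) * (\<Sum>j\<le>m. s ^ j))"
      by (simp add: sum_distrib_left)
  qed
  also have "\<dots> = ennreal ((1 - pgf p s) / (1 - s))"
  proof -
    have g: "(\<lambda>m. pmf p (Suc m) * (\<Sum>j\<le>m. s ^ j)) sums ((1 - pgf p s) / (1 - s))"
      using gp_sums s0 s1 by blast
    have "(\<Sum>m. ennreal (pmf p (Suc m) * (\<Sum>j\<le>m. s ^ j))) = ennreal (\<Sum>m. pmf p (Suc m) * (\<Sum>j\<le>m. s ^ j))"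
      using s0 g by (intro suminf_ennreal2) (auto intro!: sum_nonneg mult_nonneg_nonneg sums_summable)
    then show ?thesis using g sums_unique by metis
  qed
  also have "ennreal c * ennreal ((1 - pgf p s) / (1 - s)) = 1"
  proof -
    have "0 \<le> (1 - pgf p s) / (1 - s)" using pgf_range[of s p] s0 s1 by simp
    then have "ennreal c * ennreal ((1 - pgf p s) / (1 - s)) = ennreal (c * ((1 - pgf p s) / (1 - s)))"
      using c0 by (intro ennreal_mult[symmetric]) auto
    then show ?thesis by (simp only: cc ennreal_1)
  qed
  finally show "(\<integral>\<^sup>+i. ennreal (f i) \<partial>count_space UNIV) = 1" .
  have fi2: "ennreal (f i * s ^ i) = ennreal c * (\<Sum>j. ennreal (pmf p (j + i + 1) * s ^ (j + i)))" for i
  proof -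
    have "f i * s ^ i = c * (\<Sum>j. pmf p (j + i + 1) * s ^ j * s ^ i)"
      unfolding f_def using suminf_mult2[OF inner_summable[OF s0 s1, of p i], of "s ^ i"] by simp
    also have "\<dots> = c * (\<Sum>j. pmf p (j + i + 1) * s ^ (j + i))"
      by (simp add: power_add mult.assoc)
    finally have e: "f i * s ^ i = c * (\<Sum>j. pmf p (j + i + 1) * s ^ (j + i))" .
    have sm: "summable (\<lambda>j. pmf p (j + i + 1) * s ^ (j + i))"
      using summable_mult2[OF inner_summable[OF s0 s1, of p i], of "s ^ i"]
      by (simp add: power_add mult.assoc)
    have "ennreal (\<Sum>j. pmf p (j + i + 1) * s ^ (j + i)) = (\<Sum>j. ennreal (pmf p (j + i + 1) * s ^ (j + i)))"
      using s0 sm by (intro suminf_ennreal2[symmetric]) auto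
    moreover have "ennreal (c * (\<Sum>j. pmf p (j + i + 1) * s ^ (j + i))) = ennreal c * ennreal (\<Sum>j. pmf p (j + i + 1) * s ^ (j + i))"
      using c0 s0 sm by (intro ennreal_mult) (auto intro!: suminf_nonneg)
    ultimately show ?thesis unfolding e by simp
  qed
  have "(\<Sum>i. ennreal (f i * s ^ i)) = ennreal c * (\<Sum>i. \<Sum>j. ennreal (pmf p (j + i + 1) * s ^ (j + i)))"
    by (simp add: fi2)
  also have "(\<Sum>i. \<Sum>j. ennreal (pmf p (j + i + 1) * s ^ (j + i))) = (\<Sum>m. \<Sum>j\<le>m. ennreal (pmf p (j + (m - j) + 1) * s ^ (j + (m - j))))"
    by (rule diag_ennreal)
  also have "\<dots> = (\<Sum>m. ennreal (diffs (pmf p) m * s ^ m))"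
  proof (rule suminf_cong)
    fix m
    have "(\<Sum>j\<le>m. ennreal (pmf p (j + (m - j) + 1) * s ^ (j + (m - j)))) = (\<Sum>j\<le>m. ennreal (pmf p (Suc m) * s ^ m))"
      by (rule sum.cong) auto
    also have "\<dots> = ennreal (\<Sum>j\<le>m. pmf p (Suc m) * s ^ m)"
      using s0 by (intro sum_ennreal) auto
    also have "\<dots> = ennreal (diffs (pmf p) m * s ^ m)"
      by (simp add: diffs_def mult.assoc)
    finally show "(\<Sum>j\<le>m. ennreal (pmf p (j + (m - j) + 1) * s ^ (j + (m - j)))) = ennreal (diffs (pmf p) m * s ^ m)" .
  qed
  also have "\<dots> = ennreal (deriv (pgf p) s)"
    using pgf_deriv[OF s0 s1, of p] s0
    by (simp add: suminf_ennreal2 diffs_def)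
  also have "ennreal c * ennreal (deriv (pgf p) s) = ennreal (c * deriv (pgf p) s)"
  proof -
    have "0 \<le> deriv (pgf p) s"
      unfolding pgf_deriv(1)[OF s0 s1] using pgf_deriv(2)[OF s0 s1, of p] s0
      by (intro suminf_nonneg) (auto simp: diffs_def)
    then show ?thesis using c0 by (intro ennreal_mult[symmetric]) auto
  qed
  finally show "(\<Sum>i. ennreal (f i * s ^ i)) = ennreal (c * deriv (pgf p) s)" .
qed

lemma Zhat0:
  assumes z1: "z \<ge> 1" and pm: "pm1 q z n > 0"
  shows "pmf (Zhat_law q z n 0) 0 = pp q 0 n / pm1 q z n * deriv (fgen q z 0) (fcomp q 0 n 0)"
proof -
  define s where "s = fcomp q 0 n 0"
  have s0: "0 \<le> s" and s1: "s \<le> 1" using fcomp_range[of 0 q 0 n] by (auto simp: s_def)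
  have pmz: "pm1 q z n = 1 - s ^ z" by (simp add: pm1_def s_def)
  define f where "f = (\<lambda>i::nat. if i \<le> z - 1 then (1 - s) / pm1 q z n * s ^ (z - i - 1) else 0)"
  have Y: "Yhat q z n 0 = embed_pmf f" unfolding Yhat_def f_def s_def by simp
  have fnn: "0 \<le> f i" for i using s0 s1 pm by (simp add: f_def)
  have fz: "f i = 0" if "i \<notin> {..<z}" for i using that z1 by (auto simp: f_def)
  have "(\<Sum>i<z. f i) = (1 - s) / pm1 q z n * (\<Sum>i<z. s ^ (z - Suc i))"
    unfolding sum_distrib_left
  proof (rule sum.cong)
    fix i assume "i \<in> {..<z}"
    then show "f i = (1 - s) / pm1 q z n * s ^ (z - Suc i)" by (auto simp: f_def)
  qed simp
  also have "\<dots> = 1"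
  proof -
    have h: "pm1 q z n = (1 - s) * (\<Sum>i<z. s ^ (z - Suc i))" using one_diff_power_eq'[of s z] by (simp add: pmz)
    then have "(1 - s) \<noteq> 0" "(\<Sum>i<z. s ^ (z - Suc i)) \<noteq> 0" using pm by auto
    then show ?thesis by (simp add: h)
  qed
  finally have fsum: "(\<Sum>i<z. f i) = 1" .
  have "(\<integral>\<^sup>+i. ennreal (f i) \<partial>count_space UNIV) = (\<Sum>i. ennreal (f i))"
    by (simp add: nn_integral_count_space_nat)
  also have "\<dots> = (\<Sum>i<z. ennreal (f i))" by (rule suminf_finite) (auto simp: fz)
  also have "\<dots> = 1" using fnn fsum by (simp add: sum_ennreal)
  finally have int1: "(\<integral>\<^sup>+i. ennreal (f i) \<partial>count_space UNIV) = 1" .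
  have pY: "pmf (Yhat q z n 0) i = f i" for i
    unfolding Y using fnn int1 by (rule pmf_embed_pmf)
  have "ennreal (pmf (Zhat_law q z n 0) 0) = (\<Sum>y. ennreal (f y * s ^ y))"
    using Zhat_zero_sum[of q z n 0] by (simp add: pY s_def)
  also have "\<dots> = (\<Sum>y<z. ennreal (f y * s ^ y))" by (rule suminf_finite) (auto simp: fz)
  also have "\<dots> = (\<Sum>y<z. ennreal ((1 - s) / pm1 q z n * s ^ (z - 1)))"
  proof (rule sum.cong)
    fix y assume "y \<in> {..<z}"
    then have "s ^ (z - y - 1) * s ^ y = s ^ (z - 1)" by (simp flip: power_add)
    then show "ennreal (f y * s ^ y) = ennreal ((1 - s) / pm1 q z n * s ^ (z - 1))"
      using \<open>y \<in> {..<z}\<close> by (auto simp: f_def mult.assoc)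
  qed simp
  also have "\<dots> = ennreal (\<Sum>y<z. (1 - s) / pm1 q z n * s ^ (z - 1))"
    using s0 s1 pm by (intro sum_ennreal) auto
  finally have E: "ennreal (pmf (Zhat_law q z n 0) 0) = ennreal (real z * ((1 - s) / pm1 q z n * s ^ (z - 1)))"
    by simp
  have "pmf (Zhat_law q z n 0) 0 = real z * ((1 - s) / pm1 q z n * s ^ (z - 1))"
    using E s0 s1 pm by (subst (asm) ennreal_inj) auto
  moreover have "deriv (fgen q z 0) s = real z * s ^ (z - 1)"
    unfolding fgen_def by (simp add: DERIV_imp_deriv DERIV_pow)
  moreover have "pp q 0 n = 1 - s" by (simp add: pp_def s_def)
  ultimately show ?thesis by (simp add: s_def)
qed

lemma Zhatk:
  assumes k1: "1 \<le> k" and kn: "k < n" and pk: "pp q k n > 0" and pk1: "pp q (k - 1) n > 0"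
  shows "pmf (Zhat_law q z n k) 0 = pp q k n / pp q (k - 1) n * deriv (fgen q z k) (fcomp q k n 0)"
proof -
  define s where "s = fcomp q k n 0"
  define c where "c = pp q k n / pp q (k - 1) n"
  have s0: "0 \<le> s" using fcomp_range[of 0 q k n] by (auto simp: s_def)
  have s1: "s < 1" using pk by (simp add: pp_def s_def)
  have c0: "0 < c" using pk pk1 by (simp add: c_def)
  have "pgf (q k) s = fcomp q (k - 1) n 0" using fcomp_step[of k n q 0] k1 kn by (simp add: s_def)
  then have cc: "c * ((1 - pgf (q k) s) / (1 - s)) = 1"
    using pk pk1 by (simp add: c_def pp_def s_def)
  define f where "f = (\<lambda>i. c * (\<Sum>j. pmf (q k) (j + i + 1) * s ^ j))"
  have Y: "Yhat q z n k = embed_pmf f" using k1 by (simp add: Yhat_def f_def s_def c_def)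
  note YP = Y_pos[OF s0 s1 c0 cc]
  have pY: "pmf (Yhat q z n k) i = f i" for i
    unfolding Y f_def using YP(1,2) by (rule pmf_embed_pmf)
  have "ennreal (pmf (Zhat_law q z n k) 0) = (\<Sum>y. ennreal (f y * s ^ y))"
    using Zhat_zero_sum[of q z n k] by (simp add: pY s_def)
  also have "\<dots> = ennreal (c * deriv (pgf (q k)) s)" unfolding f_def by (rule YP(3))
  finally have E: "ennreal (pmf (Zhat_law q z n k) 0) = ennreal (c * deriv (pgf (q k)) s)" .
  have "0 \<le> deriv (pgf (q k)) s"
    unfolding pgf_deriv(1)[OF s0 s1] using pgf_deriv(2)[OF s0 s1, of "q k"] s0
    by (intro suminf_nonneg) (auto simp: diffs_def)
  then have "pmf (Zhat_law q z n k) 0 = c * deriv (pgf (q k)) s"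
    using E c0 by (subst (asm) ennreal_inj) auto
  moreover have "fgen q z k = pgf (q k)" using k1 by (simp add: fgen_def)
  ultimately show ?thesis by (simp add: c_def s_def)
qed

theorem lemma3p1:
  fixes q :: "nat \<Rightarrow> nat pmf" and n z :: nat
  assumes "n \<ge> 1" and "z \<ge> 1"
    and "\<And>k. k < n \<Longrightarrow> pp q k n > 0"
    and "pm1 q z n > 0"
  shows "measure_pmf.prob (Pi_pmf {..<n} 0 (Zhat_law q z n))
             {\<omega>. (\<Sum>k<n. \<omega> k) = 0} = (\<Prod>k<n. pmf (Zhat_law q z n k) 0)
         \<and> (\<Prod>k<n. pmf (Zhat_law q z n k) 0)
           = pp q (n - 1) n / pm1 q z n * (\<Prod>k<n. deriv (fgen q z k) (fcomp q k n 0))"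
proof
  have set: "{\<omega>. (\<Sum>k<n. \<omega> k) = 0} = Pi {..<n} (\<lambda>_. {0::nat})" by (auto simp: Pi_def)
  show "measure_pmf.prob (Pi_pmf {..<n} 0 (Zhat_law q z n))
             {\<omega>. (\<Sum>k<n. \<omega> k) = 0} = (\<Prod>k<n. pmf (Zhat_law q z n k) 0)"
    unfolding set by (simp add: measure_Pi_pmf_Pi measure_pmf_single)
  define c where "c k = (if k = 0 then pp q 0 n / pm1 q z n else pp q k n / pp q (k - 1) n)" for k
  have Z: "pmf (Zhat_law q z n k) 0 = c k * deriv (fgen q z k) (fcomp q k n 0)" if "k < n" for k
  proof (cases "k = 0")
    case True then show ?thesis using Zhat0[OF assms(2,4)] by (simp add: c_def)
  next
    case False
    then show ?thesis using Zhatk[of k n q z] that assms(3)[of k] assms(3)[of "k - 1"] by (simp add: c_def)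
  qed
  have C: "1 \<le> m \<Longrightarrow> m \<le> n \<Longrightarrow> (\<Prod>k<m. c k) = pp q (m - 1) n / pm1 q z n" for m
  proof (induction m)
    case 0 then show ?case by simp
  next
    case (Suc m)
    show ?case
    proof (cases "m = 0")
      case True then show ?thesis by (simp add: c_def)
    next
      case False
      then have "pp q (m - 1) n > 0" using Suc.prems assms(3)[of "m - 1"] by simp
      then show ?thesis using Suc False by (simp add: c_def)
    qed
  qed
  have "(\<Prod>k<n. pmf (Zhat_law q z n k) 0) = (\<Prod>k<n. c k * deriv (fgen q z k) (fcomp q k n 0))"
    by (rule prod.cong) (auto simp: Z)
  also have "\<dots> = (\<Prod>k<n. c k) * (\<Prod>k<n. deriv (fgen q z k) (fcomp q k n 0))"
    by (rule prod.distrib)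
  also have "(\<Prod>k<n. c k) = pp q (n - 1) n / pm1 q z n" using C[of n] assms(1) by simp
  finally show "(\<Prod>k<n. pmf (Zhat_law q z n k) 0)
           = pp q (n - 1) n / pm1 q z n * (\<Prod>k<n. deriv (fgen q z k) (fcomp q k n 0))" .
qed

end
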